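(* Let $G$ be a finite simple graph that is self-complementary, i.e., isomorphic to its complement $\overline G$. Then every probability assignment $\vec p$ for $G$ is either self-consistent, or inconsistent with some self-consistent probability assignment $\vec q$ for $G$.
   Context: Let $V(G)=\{1,\dots,m\}$. A probability assignment for $G$ is a vector $\vec p=(p_i)_{i\in V(G)}\in[0,1]^{V(G)}$ with $p_i+p_j\le 1$ whenever $\{i,j\}$ is an edge of $G$. The OR product $G\ast G'$ has vertex set $V(G)\times V(G')$, with $(i,i')$ and $(j,j')$ adjacent iff $\{i,j\}\in E(G)$ or $\{i',j'\}\in E(G')$; $G^{\ast n}$ denotes the OR product of $n$ copies of $G$. A clique is a set of pairwise adjacent vertices. For vectors $\vec p,\vec q$ indexed by $V(G)$, $\vec p\otimes\vec q$ is the vector indexed by $V(G)\times V(G)$ with entries $p_iq_j$, and $\vec p^{\,\otimes n}$ has entries $p_{i_1}\cdots p_{i_n}$. A probability assignment $\vec p$ for $G$ is self-consistent if for every $n\ge 1$ and every clique $C$ of $G^{\ast n}$ one has $\sum_{(i_1,\dots,i_n)\in C}p_{i_1}\cdots p_{i_n}\le 1$; otherwise it is self-inconsistent. A probability assignment $\vec p$ for $G$ is inconsistent with a self-consistent probability assignment $\vec q$ for $G$ if there is a clique $C$ of $G\ast G$ with $\sum_{(i,j)\in C}p_iq_j>1$. *)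

theory Defs
  imports Complex_Main
begin

definition simple_graph :: "'a set \<Rightarrow> ('a \<Rightarrow> 'a \<Rightarrow> bool) \<Rightarrow> bool" where
  "simple_graph V E \<longleftrightarrow> finite V \<and> (\<forall>x y. E x y \<longrightarrow> x \<in> V \<and> y \<in> V)
     \<and> (\<forall>x y. E x y \<longrightarrow> E y x) \<and> (\<forall>x. \<not> E x x)"

definition compl_edges :: "'a set \<Rightarrow> ('a \<Rightarrow> 'a \<Rightarrow> bool) \<Rightarrow> 'a \<Rightarrow> 'a \<Rightarrow> bool" where
  "compl_edges V E x y \<longleftrightarrow> x \<in> V \<and> y \<in> V \<and> x \<noteq> y \<and> \<not> E x y"

definition graph_iso :: "'a set \<Rightarrow> ('a \<Rightarrow> 'a \<Rightarrow> bool) \<Rightarrow> 'a set \<Rightarrow> ('a \<Rightarrow> 'a \<Rightarrow> bool) \<Rightarrow> bool" where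
  "graph_iso V E W F \<longleftrightarrow> (\<exists>f. bij_betw f V W \<and> (\<forall>x\<in>V. \<forall>y\<in>V. E x y \<longleftrightarrow> F (f x) (f y)))"

definition self_complementary :: "'a set \<Rightarrow> ('a \<Rightarrow> 'a \<Rightarrow> bool) \<Rightarrow> bool" where
  "self_complementary V E \<longleftrightarrow> graph_iso V E V (compl_edges V E)"

definition prob_assignment :: "'a set \<Rightarrow> ('a \<Rightarrow> 'a \<Rightarrow> bool) \<Rightarrow> ('a \<Rightarrow> real) \<Rightarrow> bool" where
  "prob_assignment V E p \<longleftrightarrow> (\<forall>i\<in>V. 0 \<le> p i \<and> p i \<le> 1)
     \<and> (\<forall>i j. E i j \<longrightarrow> p i + p j \<le> 1)"

definition or_pow_vertices :: "'a set \<Rightarrow> nat \<Rightarrow> 'a list set" where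
  "or_pow_vertices V n = {xs. length xs = n \<and> set xs \<subseteq> V}"

definition or_pow_adj :: "('a \<Rightarrow> 'a \<Rightarrow> bool) \<Rightarrow> 'a list \<Rightarrow> 'a list \<Rightarrow> bool" where
  "or_pow_adj E xs ys \<longleftrightarrow> (\<exists>k < min (length xs) (length ys). E (xs ! k) (ys ! k))"

definition is_clique_or_pow :: "'a set \<Rightarrow> ('a \<Rightarrow> 'a \<Rightarrow> bool) \<Rightarrow> nat \<Rightarrow> 'a list set \<Rightarrow> bool" where
  "is_clique_or_pow V E n C \<longleftrightarrow> C \<subseteq> or_pow_vertices V n
     \<and> (\<forall>x\<in>C. \<forall>y\<in>C. x \<noteq> y \<longrightarrow> or_pow_adj E x y)"

definition self_consistent :: "'a set \<Rightarrow> ('a \<Rightarrow> 'a \<Rightarrow> bool) \<Rightarrow> ('a \<Rightarrow> real) \<Rightarrow> bool" where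
  "self_consistent V E p \<longleftrightarrow> prob_assignment V E p \<and>
     (\<forall>n\<ge>1. \<forall>C. is_clique_or_pow V E n C \<longrightarrow> (\<Sum>xs\<in>C. prod_list (map p xs)) \<le> 1)"

definition or_adj2 :: "('a \<Rightarrow> 'a \<Rightarrow> bool) \<Rightarrow> 'a \<times> 'a \<Rightarrow> 'a \<times> 'a \<Rightarrow> bool" where
  "or_adj2 E u v \<longleftrightarrow> E (fst u) (fst v) \<or> E (snd u) (snd v)"

definition is_clique_or2 :: "'a set \<Rightarrow> ('a \<Rightarrow> 'a \<Rightarrow> bool) \<Rightarrow> ('a \<times> 'a) set \<Rightarrow> bool" where
  "is_clique_or2 V E C \<longleftrightarrow> C \<subseteq> V \<times> V \<and> (\<forall>u\<in>C. \<forall>v\<in>C. u \<noteq> v \<longrightarrow> or_adj2 E u v)"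

definition inconsistent_with :: "'a set \<Rightarrow> ('a \<Rightarrow> 'a \<Rightarrow> bool) \<Rightarrow> ('a \<Rightarrow> real) \<Rightarrow> ('a \<Rightarrow> real) \<Rightarrow> bool" where
  "inconsistent_with V E p q \<longleftrightarrow>
     (\<exists>C. is_clique_or2 V E C \<and> (\<Sum>(i,j)\<in>C. p i * q j) > 1)"

end

theory Submission
  imports Defs "HOL-Analysis.Analysis"
begin
definition ip :: "'d set \<Rightarrow> ('d \<Rightarrow> real) \<Rightarrow> ('d \<Rightarrow> real) \<Rightarrow> real" where
  "ip D x y = (\<Sum>d\<in>D. x d * y d)"

fun tens :: "('a \<Rightarrow> 'd \<Rightarrow> real) \<Rightarrow> 'a list \<Rightarrow> 'd list \<Rightarrow> real" where
  "tens u [] [] = 1"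
| "tens u (x#X) (k#ks) = u x k * tens u X ks"
| "tens u _ _ = 0"

lemma lists_Suc_eq:
  "{ks. length ks = Suc m \<and> set ks \<subseteq> D} = (\<lambda>(k,ks). k # ks) ` (D \<times> {ks. length ks = m \<and> set ks \<subseteq> D})"
proof (intro set_eqI iffI)
  fix ks assume "ks \<in> {ks. length ks = Suc m \<and> set ks \<subseteq> D}"
  then show "ks \<in> (\<lambda>(k,ks). k # ks) ` (D \<times> {ks. length ks = m \<and> set ks \<subseteq> D})"
    by (cases ks) auto
qed auto

lemma tens_sum:
  assumes "finite D"
  shows "length X = m \<Longrightarrow> length Y = m \<Longrightarrow>
    (\<Sum>ks\<in>{ks. length ks = m \<and> set ks \<subseteq> D}. tens u X ks * tens v Y ks)
     = prod_list (map2 (\<lambda>x y. ip D (u x) (v y)) X Y)"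
proof (induction m arbitrary: X Y)
  case 0
  have "{ks. length ks = 0 \<and> set ks \<subseteq> D} = {[]}" by auto
  with 0 show ?case by simp
next
  case (Suc m)
  obtain x X' where X: "X = x # X'" using Suc.prems by (cases X) auto
  obtain y Y' where Y: "Y = y # Y'" using Suc.prems by (cases Y) auto
  have len: "length X' = m" "length Y' = m" using Suc.prems X Y by auto
  have inj: "inj_on (\<lambda>(k,ks). k # ks) (D \<times> {ks. length ks = m \<and> set ks \<subseteq> D})"
    by (auto simp: inj_on_def)
  have "(\<Sum>ks\<in>{ks. length ks = Suc m \<and> set ks \<subseteq> D}. tens u X ks * tens v Y ks)
      = (\<Sum>(k,ks)\<in>D \<times> {ks. length ks = m \<and> set ks \<subseteq> D}. tens u X (k#ks) * tens v Y (k#ks))"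
    unfolding lists_Suc_eq by (subst sum.reindex[OF inj]) (simp add: case_prod_beta)
  also have "\<dots> = (\<Sum>k\<in>D. \<Sum>ks\<in>{ks. length ks = m \<and> set ks \<subseteq> D}. (u x k * v y k) * (tens u X' ks * tens v Y' ks))"
    unfolding sum.cartesian_product[symmetric] X Y by (simp add: algebra_simps)
  also have "\<dots> = (\<Sum>k\<in>D. u x k * v y k) * (\<Sum>ks\<in>{ks. length ks = m \<and> set ks \<subseteq> D}. tens u X' ks * tens v Y' ks)"
    by (simp add: sum_distrib_left sum_distrib_right) (rule sum.swap)
  also have "\<dots> = ip D (u x) (v y) * prod_list (map2 (\<lambda>x y. ip D (u x) (v y)) X' Y')"
    using Suc.IH[OF len] by (simp add: ip_def)
  finally show ?case by (simp add: X Y)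
qed

lemma bessel:
  assumes "finite I" "finite L"
    and n1: "\<And>x. x \<in> L \<Longrightarrow> ip I (U x) (U x) \<le> 1"
    and orth: "\<And>x y. x \<in> L \<Longrightarrow> y \<in> L \<Longrightarrow> x \<noteq> y \<Longrightarrow> ip I (U x) (U y) = 0"
  shows "(\<Sum>x\<in>L. (ip I C (U x))\<^sup>2) \<le> ip I C C"
proof -
  define a where "a x = ip I C (U x)" for x
  define S where "S i = (\<Sum>x\<in>L. a x * U x i)" for i
  have "0 \<le> (\<Sum>i\<in>I. (C i - S i)\<^sup>2)" by (simp add: sum_nonneg)
  also have "\<dots> = ip I C C - 2 * (\<Sum>i\<in>I. C i * S i) + (\<Sum>i\<in>I. S i * S i)"
    by (simp add: ip_def power2_eq_square algebra_simps sum.distrib sum_subtractf sum_distrib_left)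
  also have "(\<Sum>i\<in>I. C i * S i) = (\<Sum>x\<in>L. (a x)\<^sup>2)"
  proof -
    have "(\<Sum>i\<in>I. C i * S i) = (\<Sum>x\<in>L. a x * (\<Sum>i\<in>I. C i * U x i))"
      unfolding S_def by (simp add: sum_distrib_left sum_distrib_right algebra_simps sum.swap[of _ I])
    also have "\<dots> = (\<Sum>x\<in>L. (a x)\<^sup>2)" by (simp add: a_def ip_def power2_eq_square)
    finally show ?thesis .
  qed
  also have "(\<Sum>i\<in>I. S i * S i) = (\<Sum>x\<in>L. \<Sum>y\<in>L. a x * a y * ip I (U x) (U y))"
    unfolding S_def ip_def
    by (simp add: sum_distrib_left sum_distrib_right algebra_simps sum.swap[of _ I])
  also have "\<dots> = (\<Sum>x\<in>L. (a x)\<^sup>2 * ip I (U x) (U x))"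
  proof (rule sum.cong[OF refl])
    fix x assume x: "x \<in> L"
    have "(\<Sum>y\<in>L. a x * a y * ip I (U x) (U y)) = a x * a x * ip I (U x) (U x)"
    proof -
      have "\<forall>y\<in>L - {x}. a x * a y * ip I (U x) (U y) = 0" using orth[OF x] by auto
      then have "(\<Sum>y\<in>L - {x}. a x * a y * ip I (U x) (U y)) = 0" by (rule sum.neutral)
      then show ?thesis by (simp add: sum.remove[OF assms(2) x])
    qed
    then show "(\<Sum>y\<in>L. a x * a y * ip I (U x) (U y)) = (a x)\<^sup>2 * ip I (U x) (U x)"
      by (simp add: power2_eq_square)
  qed
  also have "\<dots> \<le> (\<Sum>x\<in>L. (a x)\<^sup>2)"
    by (rule sum_mono) (simp add: mult_left_le n1)
  finally show ?thesis unfolding a_def by linarith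
qed

lemma prod_list_map_sq: "(prod_list (map f X))\<^sup>2 = prod_list (map (\<lambda>x. (f x :: real)\<^sup>2) X)"
  by (induction X) (auto simp: power_mult_distrib)

lemma prod_list_le_one': "(\<And>x. x \<in> set X \<Longrightarrow> 0 \<le> f x \<and> f x \<le> (1::real)) \<Longrightarrow> 0 \<le> prod_list (map f X) \<and> prod_list (map f X) \<le> 1"
  by (induction X) (auto intro: mult_le_one)

lemma prod_list_le_one: "(\<And>x. x \<in> set X \<Longrightarrow> 0 \<le> f x \<and> f x \<le> (1::real)) \<Longrightarrow> prod_list (map f X) \<le> 1"
  using prod_list_le_one' by blast

lemma ip_self_nonneg: "0 \<le> ip D x x"
  by (simp add: ip_def sum_nonneg)

lemma onr_clique_bound:
  fixes u :: "'a \<Rightarrow> 'd \<Rightarrow> real" and c :: "'d \<Rightarrow> real"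
  assumes "finite V" "finite D"
   and un: "\<forall>i\<in>V. ip D (u i) (u i) \<le> 1"
   and orth: "\<forall>i j. F i j \<longrightarrow> ip D (u i) (u j) = 0"
   and cn: "ip D c c \<le> 1"
   and L: "is_clique_or_pow V F n L"
  shows "(\<Sum>X\<in>L. prod_list (map (\<lambda>i. (ip D c (u i))\<^sup>2) X)) \<le> 1"
proof -
  define I where "I = {ks. length ks = n \<and> set ks \<subseteq> D}"
  have fI: "finite I" unfolding I_def using finite_lists_length_eq[OF assms(2), of n]
    by (simp add: conj_commute)
  have LV: "L \<subseteq> or_pow_vertices V n" using L by (simp add: is_clique_or_pow_def)
  have fL: "finite L"
    by (rule finite_subset[OF LV])
      (use finite_lists_length_eq[OF assms(1), of n] in \<open>simp add: or_pow_vertices_def conj_commute\<close>)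
  have lenL: "length X = n" "set X \<subseteq> V" if "X \<in> L" for X
    using LV that by (auto simp: or_pow_vertices_def)
  define R where "R = replicate n (undefined::'a)"
  define Cv where "Cv = tens (\<lambda>_. c) R"
  have ipT: "ip I (tens a X) (tens b Y) = prod_list (map2 (\<lambda>x y. ip D (a x) (b y)) X Y)"
    if "length X = n" "length Y = n" for a b :: "'a \<Rightarrow> 'd \<Rightarrow> real" and X Y
    unfolding I_def ip_def[of "{ks. length ks = n \<and> set ks \<subseteq> D}"] by (rule tens_sum[OF assms(2) that])
  have ipUU: "ip I (tens u X) (tens u Y) = prod_list (map2 (\<lambda>x y. ip D (u x) (u y)) X Y)"
    if "length X = n" "length Y = n" for X Y
    by (rule ipT[OF that])
  have ipCU: "ip I Cv (tens u X) = prod_list (map (\<lambda>y. ip D c (u y)) X)" if "length X = n" for X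
  proof -
    have "ip I Cv (tens u X) = prod_list (map2 (\<lambda>x y. ip D ((\<lambda>_. c) x) (u y)) R X)"
      unfolding Cv_def by (rule ipT) (auto simp: R_def that)
    also have "\<dots> = prod_list (map (\<lambda>y. ip D c (u y)) X)"
      by (simp add: R_def zip_replicate1 that[symmetric] comp_def)
    finally show ?thesis .
  qed
  have ipCC: "ip I Cv Cv = (ip D c c) ^ n"
  proof -
    have "ip I Cv Cv = prod_list (map2 (\<lambda>x y. ip D ((\<lambda>_. c) x) ((\<lambda>_. c) y)) R R)"
      unfolding Cv_def by (rule ipT) (auto simp: R_def)
    also have "\<dots> = (ip D c c) ^ n"
      by (simp add: R_def zip_replicate1 comp_def)
    finally show ?thesis .
  qed
  have "(\<Sum>X\<in>L. (ip I Cv (tens u X))\<^sup>2) \<le> ip I Cv Cv"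
  proof (rule bessel[OF fI fL])
    fix X assume X: "X \<in> L"
    have "ip I (tens u X) (tens u X) = prod_list (map (\<lambda>x. ip D (u x) (u x)) X)"
      using ipUU[OF lenL(1)[OF X] lenL(1)[OF X]] by (simp add: zip_same_conv_map comp_def)
    also have "\<dots> \<le> 1"
      by (rule prod_list_le_one) (use un lenL(2)[OF X] ip_self_nonneg in blast)
    finally show "ip I (tens u X) (tens u X) \<le> 1" .
  next
    fix X Y assume X: "X \<in> L" and Y: "Y \<in> L" and XY: "X \<noteq> Y"
    then have "or_pow_adj F X Y" using L by (auto simp: is_clique_or_pow_def)
    then obtain k where k: "k < min (length X) (length Y)" "F (X ! k) (Y ! k)"
      by (auto simp: or_pow_adj_def)
    have "map2 (\<lambda>x y. ip D (u x) (u y)) X Y ! k = 0"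
      using k orth by simp
    then have "0 \<in> set (map2 (\<lambda>x y. ip D (u x) (u y)) X Y)"
      by (metis k(1) length_map length_zip nth_mem)
    then show "ip I (tens u X) (tens u Y) = 0"
      using ipUU[OF lenL(1)[OF X] lenL(1)[OF Y]] by (simp add: prod_list_zero_iff)
  qed
  also have "\<dots> \<le> 1" unfolding ipCC using cn ip_self_nonneg by (rule power_le_one[rotated])
  finally show ?thesis
    using ipCU lenL(1) by (simp add: prod_list_map_sq)
qed

lemma onr_sc:
  fixes u :: "'a \<Rightarrow> 'd \<Rightarrow> real" and c :: "'d \<Rightarrow> real"
  assumes "finite V" "finite D"
   and Firr: "\<forall>x. \<not> F x x" and Fsym: "\<forall>x y. F x y \<longrightarrow> F y x" and Fin: "\<forall>x y. F x y \<longrightarrow> x \<in> V \<and> y \<in> V"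
   and un: "\<forall>i\<in>V. ip D (u i) (u i) \<le> 1"
   and orth: "\<forall>i j. F i j \<longrightarrow> ip D (u i) (u j) = 0"
   and cn: "ip D c c \<le> 1"
  shows "self_consistent V F (\<lambda>i. (ip D c (u i))\<^sup>2)"
proof -
  note B = onr_clique_bound[OF assms(1,2) un orth cn]
  have one: "(ip D c (u i))\<^sup>2 \<le> 1" if "i \<in> V" for i
  proof -
    have "is_clique_or_pow V F 1 {[i]}"
      using that by (auto simp: is_clique_or_pow_def or_pow_vertices_def)
    from B[OF this] show ?thesis by simp
  qed
  have two: "(ip D c (u i))\<^sup>2 + (ip D c (u j))\<^sup>2 \<le> 1" if "F i j" for i j
  proof -
    have ij: "i \<noteq> j" "i \<in> V" "j \<in> V" using that Firr Fin by metis+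
    have "is_clique_or_pow V F 1 {[i],[j]}"
      using ij that Fsym by (auto simp: is_clique_or_pow_def or_pow_vertices_def or_pow_adj_def)
    from B[OF this] ij show ?thesis by simp
  qed
  show ?thesis
    unfolding self_consistent_def prob_assignment_def
    using one two B by auto
qed

definition quad :: "'a set \<Rightarrow> ('a \<Rightarrow> 'a \<Rightarrow> real) \<Rightarrow> ('a \<Rightarrow> real) \<Rightarrow> real" where
  "quad V Y z = (\<Sum>i\<in>V. \<Sum>j\<in>V. z i * z j * Y i j)"

lemma quad_insert:
  assumes "finite V" "v \<notin> V" and sym: "\<And>i j. Y i j = Y j i"
  shows "quad (insert v V) Y (z(v:=t)) = Y v v * t\<^sup>2 + 2 * t * (\<Sum>j\<in>V. Y v j * z j) + quad V Y z"
proof -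
  have zV: "(z(v:=t)) j = z j" if "j \<in> V" for j using that assms(2) by auto
  have "quad (insert v V) Y (z(v:=t)) =
     (t * t * Y v v + (\<Sum>j\<in>V. t * z j * Y v j)) + (\<Sum>i\<in>V. z i * t * Y i v + (\<Sum>j\<in>V. z i * z j * Y i j))"
  proof -
    define z' where "z' = z(v:=t)"
    have inner: "(\<Sum>j\<in>insert v V. z' i * z' j * Y i j) = z' i * t * Y i v + (\<Sum>j\<in>V. z' i * z j * Y i j)" for i
    proof -
      have "(\<Sum>j\<in>insert v V. z' i * z' j * Y i j) = z' i * z' v * Y i v + (\<Sum>j\<in>V. z' i * z' j * Y i j)"
        using assms(1,2) by (rule sum.insert)
      also have "z' v = t" by (simp add: z'_def)
      also have "(\<Sum>j\<in>V. z' i * z' j * Y i j) = (\<Sum>j\<in>V. z' i * z j * Y i j)"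
        by (rule sum.cong) (simp_all add: z'_def zV del: fun_upd_apply)
      finally show ?thesis by (simp add: z'_def del: fun_upd_apply)
    qed
    have "quad (insert v V) Y z' = (\<Sum>i\<in>insert v V. z' i * t * Y i v + (\<Sum>j\<in>V. z' i * z j * Y i j))"
      unfolding quad_def inner ..
    also have "\<dots> = (z' v * t * Y v v + (\<Sum>j\<in>V. z' v * z j * Y v j)) + (\<Sum>i\<in>V. z' i * t * Y i v + (\<Sum>j\<in>V. z' i * z j * Y i j))"
      using assms(1,2) by (rule sum.insert)
    also have "(\<Sum>i\<in>V. z' i * t * Y i v + (\<Sum>j\<in>V. z' i * z j * Y i j)) = (\<Sum>i\<in>V. z i * t * Y i v + (\<Sum>j\<in>V. z i * z j * Y i j))"
      by (rule sum.cong) (simp_all add: z'_def zV del: fun_upd_apply)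
    finally show ?thesis unfolding z'_def by (simp add: algebra_simps fun_upd_same del: fun_upd_apply)
  qed
  also have "\<dots> = Y v v * t\<^sup>2 + 2 * t * (\<Sum>j\<in>V. Y v j * z j) + quad V Y z"
  proof -
    have e1: "(\<Sum>j\<in>V. t * z j * Y v j) = t * (\<Sum>j\<in>V. Y v j * z j)"
      by (simp add: sum_distrib_left mult_ac)
    have e2: "(\<Sum>i\<in>V. z i * t * Y i v + (\<Sum>j\<in>V. z i * z j * Y i j)) = t * (\<Sum>j\<in>V. Y v j * z j) + quad V Y z"
      unfolding quad_def sum.distrib by (simp add: sum_distrib_left sym[of _ v] mult_ac)
    show ?thesis unfolding e1 e2 by (simp add: power2_eq_square)
  qed
  finally show ?thesis .
qed

lemma gram:
  assumes "finite V"
  shows "(\<And>i j. Y i j = Y j i) \<Longrightarrow> (\<And>z. 0 \<le> quad V Y z) \<Longrightarrow>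
    \<exists>x. \<forall>i\<in>V. \<forall>j\<in>V. Y i j = (\<Sum>k\<in>V. x i k * x j k)"
  using assms
proof (induction V arbitrary: Y rule: finite_induct)
  case empty
  then show ?case by simp
next
  case (insert v V)
  note sym = insert.prems(1) and psd = insert.prems(2)
  define a where "a = Y v v"
  define Y' where "Y' i j = Y i j - Y i v * Y v j / a" for i j
  have qi: "quad (insert v V) Y (z(v:=t)) = a * t\<^sup>2 + 2 * t * (\<Sum>j\<in>V. Y v j * z j) + quad V Y z" for z t
    unfolding a_def by (rule quad_insert[OF insert.hyps(1,2) sym])
  have a0: "0 \<le> a"
  proof -
    have "0 \<le> quad (insert v V) Y ((\<lambda>_. 0)(v:=1))" by (rule psd)
    then show ?thesis using qi[of "\<lambda>_. 0" 1] by (simp add: quad_def)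
  qed
  have zero: "Y v j = 0" if "a = 0" "j \<in> V" for j
  proof (rule ccontr)
    assume ne: "Y v j \<noteq> 0"
    define z where "z = (\<lambda>k. if k = j then 1 else (0::real))"
    have "(\<Sum>k\<in>V. Y v k * z k) = (\<Sum>k\<in>V. if k = j then Y v k else 0)"
      by (rule sum.cong) (auto simp: z_def)
    also have "\<dots> = Y v j" using that(2) insert.hyps(1) by simp
    finally have s: "(\<Sum>k\<in>V. Y v k * z k) = Y v j" .
    define t where "t = - (quad V Y z + 1) / (2 * Y v j)"
    have "0 \<le> quad (insert v V) Y (z(v:=t))" by (rule psd)
    also have "\<dots> = 2 * t * Y v j + quad V Y z" using qi[of z t] that(1) s by simp
    also have "\<dots> = -1" unfolding t_def using ne by (simp add: field_simps)
    finally show False by simp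
  qed
  have symY': "Y' i j = Y' j i" for i j unfolding Y'_def using sym by (simp add: algebra_simps)
  have psdY': "0 \<le> quad V Y' z" for z
  proof -
    define b where "b = (\<Sum>j\<in>V. Y v j * z j)"
    have qY': "quad V Y' z = quad V Y z - b * b / a"
    proof -
      have "quad V Y' z = quad V Y z - (\<Sum>i\<in>V. \<Sum>j\<in>V. (z i * Y i v) * (z j * Y v j) / a)"
        unfolding quad_def Y'_def by (simp add: sum_subtractf algebra_simps)
      also have "(\<Sum>i\<in>V. \<Sum>j\<in>V. (z i * Y i v) * (z j * Y v j) / a) = b * b / a"
        unfolding b_def by (simp add: sum_distrib_left sum_distrib_right sum_divide_distrib sym[of _ v] algebra_simps)
      finally show ?thesis .
    qed
    show ?thesis
    proof (cases "a = 0")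
      case True
      have "0 \<le> quad (insert v V) Y (z(v:=0))" by (rule psd)
      then show ?thesis using qi[of z 0] qY' True by simp
    next
      case False
      have "0 \<le> quad (insert v V) Y (z(v:= - b / a))" by (rule psd)
      also have "\<dots> = quad V Y z - b * b / a"
        using qi[of z "- b / a"] False unfolding b_def[symmetric]
        by (simp add: field_simps power2_eq_square)
      finally show ?thesis using qY' by simp
    qed
  qed
  obtain x' where x': "\<forall>i\<in>V. \<forall>j\<in>V. Y' i j = (\<Sum>k\<in>V. x' i k * x' j k)"
    using insert.IH[of Y'] symY' psdY' by blast
  define x where "x i k = (if k = v then Y i v / sqrt a else if i = v then 0 else x' i k)" for i k
  have sa: "sqrt a * sqrt a = a" using a0 by simp
  show ?case
  proof (intro exI ballI)
    fix i j assume i: "i \<in> insert v V" and j: "j \<in> insert v V"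
    have xs: "(\<Sum>k\<in>insert v V. x i k * x j k) = Y i v * Y j v / a + (\<Sum>k\<in>V. x i k * x j k)"
      using insert.hyps sa by (simp add: x_def sum.insert)
    show "Y i j = (\<Sum>k\<in>insert v V. x i k * x j k)"
    proof (cases "i = v")
      case iv: True
      then have z: "(\<Sum>k\<in>V. x i k * x j k) = 0" using insert.hyps(2) by (auto simp: x_def intro!: sum.neutral)
      show ?thesis
      proof (cases "a = 0")
        case True
        then show ?thesis using xs z iv zero[OF True] j sym[of j v] by (auto simp: a_def)
      next
        case False
        then show ?thesis using xs z iv sym[of j v] by (simp add: a_def)
      qed
    next
      case iv: False
      show ?thesis
      proof (cases "j = v")
        case jv: True
        then have z: "(\<Sum>k\<in>V. x i k * x j k) = 0" using insert.hyps(2) by (auto simp: x_def intro!: sum.neutral)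
        show ?thesis
        proof (cases "a = 0")
          case True
          then show ?thesis using xs z jv iv i zero[OF True] sym[of i v] by (auto simp: a_def)
        next
          case False
          then show ?thesis using xs z jv by (simp add: a_def)
        qed
      next
        case jv: False
        have iV: "i \<in> V" and jV: "j \<in> V" using i j iv jv by auto
        have "(\<Sum>k\<in>V. x i k * x j k) = (\<Sum>k\<in>V. x' i k * x' j k)"
          using insert.hyps(2) iv jv by (intro sum.cong) (auto simp: x_def)
        also have "\<dots> = Y' i j" using x' iV jV by simp
        finally show ?thesis using xs unfolding Y'_def by (simp add: sym[of j v])
      qed
    qed
  qed
qed

definition quadU :: "'a set \<Rightarrow> ('a \<times> 'a \<Rightarrow> real) \<Rightarrow> ('a \<Rightarrow> real) \<Rightarrow> real" where
  "quadU V Y z = (\<Sum>i\<in>V. \<Sum>j\<in>V. z i * z j * Y (i,j))"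

definition Yset :: "'a set \<Rightarrow> ('a \<times> 'a \<Rightarrow> real) set" where
  "Yset V = {Y. \<forall>ij. Y ij \<in> (if ij \<in> V \<times> V then {-1..1} else {0})} \<inter>
     {Y. (\<forall>i j. Y (i,j) = Y (j,i)) \<and> (\<forall>z. 0 \<le> quadU V Y z) \<and> (\<Sum>i\<in>V. Y (i,i)) = 1}"

lemma cont_coord [continuous_intros]: "continuous_on UNIV (\<lambda>Y::('b \<Rightarrow> real). Y i)"
  by simp

lemma Yset_compact:
  assumes "finite V"
  shows "compact (Yset V)"
proof -
  let ?S = "\<lambda>ij::'a\<times>'a. if ij \<in> V \<times> V then {-1..1::real} else {0}"
  have "compactin (product_topology (\<lambda>_. euclidean) UNIV) (PiE UNIV ?S)"
    unfolding compactin_PiE by auto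
  then have c1: "compact {Y. \<forall>ij. Y ij \<in> ?S ij}"
    unfolding euclidean_product_topology compactin_euclidean_iff PiE_UNIV_domain Pi_def by simp
  have c2: "closed {Y::'a\<times>'a\<Rightarrow>real. (\<forall>i j. Y (i,j) = Y (j,i)) \<and> (\<forall>z. 0 \<le> quadU V Y z) \<and> (\<Sum>i\<in>V. Y (i,i)) = 1}"
    unfolding quadU_def
    by (intro closed_Collect_conj closed_Collect_all closed_Collect_eq closed_Collect_le continuous_intros)
  show ?thesis unfolding Yset_def using c1 c2 by blast
qed

lemma quadU_comb:
  "quadU V (\<lambda>ij. Y0 ij + t * (Y ij - Y0 ij)) z = (1 - t) * quadU V Y0 z + t * quadU V Y z"
  unfolding quadU_def by (simp add: algebra_simps sum.distrib sum_distrib_left sum_subtractf)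

lemma Yset_comb:
  assumes "Y0 \<in> Yset V" "Y \<in> Yset V" "0 \<le> t" "t \<le> 1"
  shows "(\<lambda>ij. Y0 ij + t * (Y ij - Y0 ij)) \<in> Yset V"
proof -
  have box: "Y0 ij + t * (Y ij - Y0 ij) \<in> (if ij \<in> V \<times> V then {-1..1} else {0})" for ij
  proof -
    have a: "Y0 ij \<in> (if ij \<in> V \<times> V then {-1..1} else {0})" "Y ij \<in> (if ij \<in> V \<times> V then {-1..1} else {0})"
      using assms(1,2) unfolding Yset_def by blast+
    have "Y0 ij + t * (Y ij - Y0 ij) = (1 - t) * Y0 ij + t * Y ij" by (simp add: algebra_simps)
    moreover have "-1 \<le> (1 - t) * Y0 ij + t * Y ij \<and> (1 - t) * Y0 ij + t * Y ij \<le> 1"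
      if "-1 \<le> Y0 ij" "Y0 ij \<le> 1" "-1 \<le> Y ij" "Y ij \<le> 1"
    proof -
      have h1: "(1 - t) * Y0 ij \<le> 1 - t" using mult_left_mono[OF that(2), of "1-t"] assms(4) by simp
      have h2: "t * Y ij \<le> t" using mult_left_mono[OF that(4), of t] assms(3) by simp
      have h3: "-(1 - t) \<le> (1 - t) * Y0 ij" using mult_left_mono[OF that(1), of "1-t"] assms(4) by simp
      have h4: "-t \<le> t * Y ij" using mult_left_mono[OF that(3), of t] assms(3) by simp
      show ?thesis using h1 h2 h3 h4 by linarith
    qed
    ultimately show ?thesis using a by (auto split: if_splits)
  qed
  have q: "0 \<le> quadU V (\<lambda>ij. Y0 ij + t * (Y ij - Y0 ij)) z" for z
  proof -
    have "0 \<le> quadU V Y0 z" "0 \<le> quadU V Y z" using assms(1,2) by (auto simp: Yset_def)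
    then show ?thesis unfolding quadU_comb using assms(3,4) by simp
  qed
  have tr: "(\<Sum>i\<in>V. Y0 (i,i) + t * (Y (i,i) - Y0 (i,i))) = 1"
  proof -
    have "(\<Sum>i\<in>V. Y0 (i,i) + t * (Y (i,i) - Y0 (i,i))) = (1 - t) * (\<Sum>i\<in>V. Y0 (i,i)) + t * (\<Sum>i\<in>V. Y (i,i))"
      by (simp add: algebra_simps sum.distrib sum_distrib_left sum_subtractf)
    then show ?thesis using assms(1,2) by (simp add: Yset_def)
  qed
  have sym: "Y0 (i,j) + t*(Y (i,j) - Y0 (i,j)) = Y0 (j,i) + t*(Y (j,i) - Y0 (j,i))" for i j
    using assms(1,2) unfolding Yset_def by auto
  show ?thesis unfolding Yset_def Int_iff mem_Collect_eq using box q tr sym by blast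
qed

lemma Yset_I:
  assumes "finite V" "V \<noteq> {}"
  shows "(\<lambda>(i,j). if i \<in> V \<and> j = i then 1 / real (card V) else 0) \<in> Yset V"
proof -
  have n: "1 \<le> real (card V)" using assms by (simp add: Suc_le_eq card_gt_0_iff)
  have q: "quadU V (\<lambda>(i,j). if i \<in> V \<and> j = i then 1 / real (card V) else 0) z = (\<Sum>i\<in>V. (z i)\<^sup>2) / real (card V)" for z
  proof -
    have "quadU V (\<lambda>(i,j). if i \<in> V \<and> j = i then 1 / real (card V) else 0) z
        = (\<Sum>i\<in>V. \<Sum>j\<in>V. if j = i then z i * z i / real (card V) else 0)"
      unfolding quadU_def by (intro sum.cong refl) auto
    also have "\<dots> = (\<Sum>i\<in>V. z i * z i / real (card V))"
      using assms(1) by (intro sum.cong refl) (simp add: sum.delta')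
    finally show ?thesis by (simp add: power2_eq_square sum_divide_distrib)
  qed
  have tr: "(\<Sum>i\<in>V. (\<lambda>(i,j). if i \<in> V \<and> j = i then 1 / real (card V) else 0) (i,i)) = 1"
    using n by simp
  have b0: "0 \<le> 1 / real (card V)" using n by simp
  have b: "-1 \<le> 1 / real (card V)" using b0 by linarith
  have b': "1 / real (card V) \<le> 1" using n by simp
  show ?thesis unfolding Yset_def using b b' n q tr by (auto simp: sum_nonneg)
qed

lemma Yset_rank1:
  assumes "finite V" "0 < (\<Sum>i\<in>V. (z i)\<^sup>2)"
  shows "(\<lambda>(i,j). if i \<in> V \<and> j \<in> V then z i * z j / (\<Sum>i\<in>V. (z i)\<^sup>2) else 0) \<in> Yset V"
proof -
  define N where "N = (\<Sum>i\<in>V. (z i)\<^sup>2)"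
  have N: "0 < N" using assms N_def by simp
  have zi: "(z i)\<^sup>2 \<le> N" if "i \<in> V" for i
    unfolding N_def by (rule member_le_sum) (use that assms(1) in auto)
  have box: "\<bar>z i * z j\<bar> \<le> N" if "i \<in> V" "j \<in> V" for i j
  proof -
    have "2 * \<bar>z i * z j\<bar> \<le> (z i)\<^sup>2 + (z j)\<^sup>2"
      using sum_squares_bound[of "\<bar>z i\<bar>" "\<bar>z j\<bar>"] by (simp add: abs_mult power2_abs)
    then show ?thesis using zi[OF that(1)] zi[OF that(2)] by linarith
  qed
  define M where "M = (\<lambda>(i,j). if i \<in> V \<and> j \<in> V then z i * z j / N else 0)"
  have q: "quadU V M w = (\<Sum>i\<in>V. w i * z i)\<^sup>2 / N" for w
  proof -
    have "quadU V M w = (\<Sum>i\<in>V. \<Sum>j\<in>V. (w i * z i) * (w j * z j) / N)"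
      unfolding quadU_def M_def by (intro sum.cong refl) (simp add: mult_ac)
    also have "\<dots> = (\<Sum>i\<in>V. \<Sum>j\<in>V. (w i * z i) * (w j * z j)) / N"
      by (simp add: sum_divide_distrib)
    also have "\<dots> = (\<Sum>i\<in>V. w i * z i)\<^sup>2 / N"
      by (simp add: power2_eq_square sum_product)
    finally show ?thesis .
  qed
  have tr: "(\<Sum>i\<in>V. M (i,i)) = 1"
  proof -
    have "(\<Sum>i\<in>V. M (i,i)) = (\<Sum>i\<in>V. (z i)\<^sup>2 / N)"
      unfolding M_def by (intro sum.cong refl) (simp add: power2_eq_square)
    also have "\<dots> = 1" using N by (simp add: sum_divide_distrib[symmetric] N_def)
    finally show ?thesis .
  qed
  have boxes: "M ij \<in> (if ij \<in> V \<times> V then {-1..1} else {0})" for ij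
  proof -
    obtain i j where ij: "ij = (i,j)" by (cases ij)
    show ?thesis
    proof (cases "i \<in> V \<and> j \<in> V")
    case True
    have Mij: "M ij = z i * z j / N" using True by (simp add: M_def ij)
    have "\<bar>z i * z j / N\<bar> = \<bar>z i * z j\<bar> / N" using N by (simp add: abs_divide)
    also have "\<dots> \<le> 1" using box[of i j] True N by (simp add: divide_le_eq_1)
    finally have "-1 \<le> M ij \<and> M ij \<le> 1" unfolding Mij by linarith
    then show ?thesis using True by (simp add: ij)
  next
    case False
    then have "M ij = 0" unfolding M_def ij by auto
    then show ?thesis using False by (simp add: ij)
  qed
  qed
  have sym: "M (i,j) = M (j,i)" for i j unfolding M_def by (simp add: mult.commute)
  have qn: "0 \<le> quadU V M w" for w unfolding q using N by simp
  have "M \<in> Yset V" unfolding Yset_def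
  proof (intro IntI CollectI conjI allI)
    fix ij show "M ij \<in> (if ij \<in> V \<times> V then {-1..1} else {0})" by (rule boxes)
  next
    fix i j show "M (i,j) = M (j,i)" by (rule sym)
  next
    fix w show "0 \<le> quadU V M w" by (rule qn)
  next
    show "(\<Sum>i\<in>V. M (i,i)) = 1" by (rule tr)
  qed
  then show ?thesis unfolding M_def N_def .
qed

lemma descent_arith:
  fixes S1 S2 S3 L0 L1 c :: real
  assumes Q: "0 \<le> S3 - 2 * S2 + S1"
    and lt: "S2 + (L0 - c) * (L1 - c) < S1 + (L0 - c)\<^sup>2"
  shows "\<exists>t. 0 < t \<and> t \<le> 1 \<and>
    (1-t)\<^sup>2 * S1 + 2 * t * (1-t) * S2 + t\<^sup>2 * S3 + ((1-t) * L0 + t * L1 - c)\<^sup>2 < S1 + (L0 - c)\<^sup>2"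
proof -
  define g where "g = (S2 - S1) + (L0 - c) * (L1 - L0)"
  define QQ where "QQ = S3 - 2 * S2 + S1 + (L1 - L0)\<^sup>2"
  have g: "g < 0" using lt unfolding g_def by (simp add: power2_eq_square algebra_simps)
  have QQ: "0 \<le> QQ" using Q unfolding QQ_def by simp
  have id: "(1-t)\<^sup>2 * S1 + 2 * t * (1-t) * S2 + t\<^sup>2 * S3 + ((1-t) * L0 + t * L1 - c)\<^sup>2
      = S1 + (L0 - c)\<^sup>2 + 2 * t * g + t\<^sup>2 * QQ" for t
    unfolding g_def QQ_def by (simp add: power2_eq_square algebra_simps)
  define t where "t = min 1 ((- g) / (QQ + 1))"
  have "0 < (- g) / (QQ + 1)" using g QQ by (intro divide_pos_pos) auto
  then have t0: "0 < t" by (simp add: t_def)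
  have t1: "t \<le> 1" by (simp add: t_def)
  have "t * QQ \<le> (- g) / (QQ + 1) * QQ"
    using QQ by (intro mult_right_mono) (simp_all add: t_def)
  also have "\<dots> < - g" using g QQ by (simp add: field_simps)
  finally have tQ: "t * QQ < - g" .
  have "t\<^sup>2 * QQ = t * (t * QQ)" by (simp add: power2_eq_square)
  also have "\<dots> < t * (- g)" using tQ t0 by (rule mult_strict_left_mono)
  also have "t * (- g) = - (t * g)" by simp
  finally have h: "t\<^sup>2 * QQ < - (t * g)" .
  have gt: "t * g < 0" using t0 g by (simp add: mult_pos_neg)
  have "2 * t * g + t\<^sup>2 * QQ < 0" using h gt by linarith
  then show ?thesis using t0 t1 id by (intro exI[of _ t]) auto
qed

definition Lw :: "'a set \<Rightarrow> ('a \<Rightarrow> real) \<Rightarrow> ('a \<times> 'a \<Rightarrow> real) \<Rightarrow> real" where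
  "Lw V p Y = (\<Sum>i\<in>V. \<Sum>j\<in>V. sqrt (p i) * sqrt (p j) * Y (i,j))"

definition eZ :: "'a set \<Rightarrow> ('a \<Rightarrow> 'a \<Rightarrow> bool) \<Rightarrow> 'a \<Rightarrow> 'a \<Rightarrow> real" where
  "eZ V E i j = (if compl_edges V E i j then 1 else 0)"

definition phi where
  "phi V E p \<epsilon> Y = (\<Sum>i\<in>V. \<Sum>j\<in>V. eZ V E i j * (Y (i,j))\<^sup>2) + (Lw V p Y - 1 - \<epsilon>)\<^sup>2"

lemma Lw_comb: "Lw V p (\<lambda>ij. Y0 ij + t * (Y ij - Y0 ij)) = (1 - t) * Lw V p Y0 + t * Lw V p Y"
  unfolding Lw_def by (simp add: algebra_simps sum.distrib sum_distrib_left sum_subtractf)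

lemma eZ_comb: "(\<Sum>i\<in>V. \<Sum>j\<in>V. eZ V E i j * (Y0 (i,j) + t * (Y (i,j) - Y0 (i,j)))\<^sup>2)
   = (1-t)\<^sup>2 * (\<Sum>i\<in>V. \<Sum>j\<in>V. eZ V E i j * (Y0 (i,j))\<^sup>2)
     + 2 * t * (1-t) * (\<Sum>i\<in>V. \<Sum>j\<in>V. eZ V E i j * Y0 (i,j) * Y (i,j))
     + t\<^sup>2 * (\<Sum>i\<in>V. \<Sum>j\<in>V. eZ V E i j * (Y (i,j))\<^sup>2)"
proof -
  have "eZ V E i j * (Y0 (i,j) + t * (Y (i,j) - Y0 (i,j)))\<^sup>2 =
     (1-t)\<^sup>2 * (eZ V E i j * (Y0 (i,j))\<^sup>2) + 2 * t * (1-t) * (eZ V E i j * Y0 (i,j) * Y (i,j))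
     + t\<^sup>2 * (eZ V E i j * (Y (i,j))\<^sup>2)" for i j
    by (simp add: power2_eq_square algebra_simps)
  then show ?thesis by (simp add: sum.distrib sum_distrib_left)
qed

lemma eZ_diff_nonneg: "0 \<le> (\<Sum>i\<in>V. \<Sum>j\<in>V. eZ V E i j * (Y (i,j))\<^sup>2) - 2 * (\<Sum>i\<in>V. \<Sum>j\<in>V. eZ V E i j * Y0 (i,j) * Y (i,j))
   + (\<Sum>i\<in>V. \<Sum>j\<in>V. eZ V E i j * (Y0 (i,j))\<^sup>2)"
proof -
  have "0 \<le> (\<Sum>i\<in>V. \<Sum>j\<in>V. eZ V E i j * (Y (i,j) - Y0 (i,j))\<^sup>2)"
    by (intro sum_nonneg) (simp add: eZ_def)
  also have "\<dots> = (\<Sum>i\<in>V. \<Sum>j\<in>V. eZ V E i j * (Y (i,j))\<^sup>2) - 2 * (\<Sum>i\<in>V. \<Sum>j\<in>V. eZ V E i j * Y0 (i,j) * Y (i,j))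
   + (\<Sum>i\<in>V. \<Sum>j\<in>V. eZ V E i j * (Y0 (i,j))\<^sup>2)"
  proof -
    have "eZ V E i j * (Y (i,j) - Y0 (i,j))\<^sup>2 = eZ V E i j * (Y (i,j))\<^sup>2 - 2 * (eZ V E i j * Y0 (i,j) * Y (i,j)) + eZ V E i j * (Y0 (i,j))\<^sup>2" for i j
      by (simp add: power2_eq_square algebra_simps)
    then show ?thesis by (simp add: sum.distrib sum_subtractf sum_distrib_left)
  qed
  finally show ?thesis .
qed

lemma psd_certificate:
  assumes fin: "finite V" and ne: "V \<noteq> {}" and eps: "0 < \<epsilon>"
   and Esym: "\<forall>x y. E x y \<longrightarrow> E y x" and Eirr: "\<forall>x. \<not> E x x"
   and pnn: "\<forall>i\<in>V. 0 \<le> p i"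
   and noH1: "\<forall>Y\<in>Yset V. (\<forall>i\<in>V. \<forall>j\<in>V. compl_edges V E i j \<longrightarrow> Y (i,j) = 0) \<longrightarrow> Lw V p Y \<le> 1"
  shows "\<exists>M. (\<forall>i j. M i j = M j i) \<and> (\<forall>z. 0 \<le> quad V M z) \<and> (\<forall>i\<in>V. M i i = 1 + \<epsilon> - p i)
          \<and> (\<forall>i\<in>V. \<forall>j\<in>V. E i j \<longrightarrow> M i j = - (sqrt (p i) * sqrt (p j)))"
proof -
  define Id where "Id = (\<lambda>(i,j). if i \<in> V \<and> j = i then 1 / real (card V) else (0::real))"
  have IdY: "Id \<in> Yset V" unfolding Id_def by (rule Yset_I[OF fin ne])
  have cont: "continuous_on (Yset V) (phi V E p \<epsilon>)"
    by (rule continuous_on_subset[OF _ subset_UNIV]) (unfold phi_def Lw_def, intro continuous_intros)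
  obtain Y0 where Y0: "Y0 \<in> Yset V" and Y0min: "\<forall>Y\<in>Yset V. phi V E p \<epsilon> Y0 \<le> phi V E p \<epsilon> Y"
    using continuous_attains_inf[OF Yset_compact[OF fin] _ cont] IdY by blast
  define S1 where "S1 = (\<Sum>i\<in>V. \<Sum>j\<in>V. eZ V E i j * (Y0 (i,j))\<^sup>2)"
  define b where "b = Lw V p Y0 - 1 - \<epsilon>"
  define G where "G Y = (\<Sum>i\<in>V. \<Sum>j\<in>V. eZ V E i j * Y0 (i,j) * Y (i,j)) + b * (Lw V p Y - 1 - \<epsilon>)" for Y
  have phi0: "phi V E p \<epsilon> Y0 = S1 + b\<^sup>2" unfolding phi_def S1_def b_def by simp
  have S1nn: "0 \<le> S1" unfolding S1_def by (intro sum_nonneg) (simp add: eZ_def)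
  have pos: "0 < S1 + b\<^sup>2"
  proof (rule ccontr)
    assume "\<not> 0 < S1 + b\<^sup>2"
    moreover have "0 \<le> b\<^sup>2" by simp
    ultimately have S10: "S1 = 0" and "b\<^sup>2 = 0" using S1nn by linarith+
    then have b0: "b = 0" by simp
    have "\<forall>i\<in>V. (\<Sum>j\<in>V. eZ V E i j * (Y0 (i,j))\<^sup>2) = 0"
      using S10 fin unfolding S1_def
      by (subst (asm) sum_nonneg_eq_0_iff) (auto intro!: sum_nonneg simp: eZ_def)
    then have "\<forall>i\<in>V. \<forall>j\<in>V. eZ V E i j * (Y0 (i,j))\<^sup>2 = 0"
      using fin by (subst (asm) sum_nonneg_eq_0_iff) (auto simp: eZ_def)
    then have "\<forall>i\<in>V. \<forall>j\<in>V. compl_edges V E i j \<longrightarrow> Y0 (i,j) = 0"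
      unfolding eZ_def by (metis (full_types) mult_eq_0_iff one_neq_zero power_eq_0_iff)
    then have "Lw V p Y0 \<le> 1" using noH1 Y0 by blast
    then show False using b0 eps unfolding b_def by simp
  qed
  have var: "S1 + b\<^sup>2 \<le> G Y" if Y: "Y \<in> Yset V" for Y
  proof (rule ccontr)
    assume "\<not> S1 + b\<^sup>2 \<le> G Y"
    then have lt: "G Y < S1 + b\<^sup>2" by simp
    define S2 where "S2 = (\<Sum>i\<in>V. \<Sum>j\<in>V. eZ V E i j * Y0 (i,j) * Y (i,j))"
    define S3 where "S3 = (\<Sum>i\<in>V. \<Sum>j\<in>V. eZ V E i j * (Y (i,j))\<^sup>2)"
    have Q: "0 \<le> S3 - 2 * S2 + S1" unfolding S1_def S2_def S3_def by (rule eZ_diff_nonneg)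
    have lt': "S2 + (Lw V p Y0 - (1 + \<epsilon>)) * (Lw V p Y - (1 + \<epsilon>)) < S1 + (Lw V p Y0 - (1 + \<epsilon>))\<^sup>2"
      using lt unfolding G_def S2_def b_def by (simp add: algebra_simps)
    obtain t where t: "0 < t" "t \<le> 1" and
      ineq: "(1-t)\<^sup>2 * S1 + 2 * t * (1-t) * S2 + t\<^sup>2 * S3 + ((1-t) * Lw V p Y0 + t * Lw V p Y - (1 + \<epsilon>))\<^sup>2
          < S1 + (Lw V p Y0 - (1 + \<epsilon>))\<^sup>2"
      using descent_arith[OF Q lt'] by blast
    define Yt where "Yt = (\<lambda>ij. Y0 ij + t * (Y ij - Y0 ij))"
    have YtY: "Yt \<in> Yset V" unfolding Yt_def using Yset_comb[OF Y0 Y] t by simp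
    have "phi V E p \<epsilon> Yt = (1-t)\<^sup>2 * S1 + 2 * t * (1-t) * S2 + t\<^sup>2 * S3 + ((1-t) * Lw V p Y0 + t * Lw V p Y - (1 + \<epsilon>))\<^sup>2"
      unfolding phi_def Yt_def eZ_comb Lw_comb S1_def S2_def S3_def by (simp add: algebra_simps)
    also have "\<dots> < phi V E p \<epsilon> Y0" using ineq unfolding phi0 b_def by (simp add: algebra_simps)
    finally show False using Y0min YtY by fastforce
  qed
  have bneg: "b < 0"
  proof -
    have zI: "\<forall>i\<in>V. \<forall>j\<in>V. compl_edges V E i j \<longrightarrow> Id (i,j) = 0"
      by (auto simp: Id_def compl_edges_def)
    have LI: "Lw V p Id \<le> 1" using noH1 IdY zI by blast
    have "(\<Sum>i\<in>V. \<Sum>j\<in>V. eZ V E i j * Y0 (i,j) * Id (i,j)) = 0"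
      by (intro sum.neutral ballI) (auto simp: Id_def eZ_def compl_edges_def)
    then have "G Id = b * (Lw V p Id - 1 - \<epsilon>)" unfolding G_def by simp
    then have "0 < b * (Lw V p Id - 1 - \<epsilon>)" using var[OF IdY] pos by simp
    moreover have "Lw V p Id - 1 - \<epsilon> < 0" using LI eps by simp
    ultimately show ?thesis by (simp add: zero_less_mult_iff)
  qed
  define M where "M i j = (if i = j then 1 + \<epsilon> else 0) - sqrt (p i) * sqrt (p j) + eZ V E i j * Y0 (i,j) / (- b)" for i j
  have eZsym: "eZ V E i j = eZ V E j i" for i j
    using Esym by (auto simp: eZ_def compl_edges_def)
  have Y0sym: "Y0 (i,j) = Y0 (j,i)" for i j using Y0 by (simp add: Yset_def)
  have Msym: "M i j = M j i" for i j unfolding M_def using eZsym[of i j] Y0sym[of i j] by (simp add: mult.commute)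
  have Mdiag: "M i i = 1 + \<epsilon> - p i" if "i \<in> V" for i
    using pnn that by (simp add: M_def eZ_def compl_edges_def)
  have Medge: "M i j = - (sqrt (p i) * sqrt (p j))" if "E i j" for i j
    using that Eirr by (auto simp: M_def eZ_def compl_edges_def)
  have Mpsd: "0 \<le> quad V M z" for z
  proof -
    define N where "N = (\<Sum>i\<in>V. (z i)\<^sup>2)"
    define P where "P = (\<Sum>i\<in>V. sqrt (p i) * z i)\<^sup>2"
    define T where "T = (\<Sum>i\<in>V. \<Sum>j\<in>V. eZ V E i j * Y0 (i,j) * (z i * z j))"
    have quadM: "quad V M z = (1 + \<epsilon>) * N - P + T / (- b)"
    proof -
      have "quad V M z = (\<Sum>i\<in>V. \<Sum>j\<in>V. z i * (z j * (if i = j then 1 + \<epsilon> else 0)))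
          - (\<Sum>i\<in>V. \<Sum>j\<in>V. (sqrt (p i) * z i) * (sqrt (p j) * z j))
          + (\<Sum>i\<in>V. \<Sum>j\<in>V. eZ V E i j * Y0 (i,j) * (z i * z j)) / (- b)"
        unfolding quad_def M_def
        by (simp add: algebra_simps sum_subtractf sum.distrib sum_divide_distrib)
      also have "(\<Sum>i\<in>V. \<Sum>j\<in>V. z i * (z j * (if i = j then 1 + \<epsilon> else 0))) = (1 + \<epsilon>) * N"
      proof -
        have "(\<Sum>j\<in>V. z i * (z j * (if i = j then 1 + \<epsilon> else 0))) = (1 + \<epsilon>) * (z i)\<^sup>2" if "i \<in> V" for i
        proof -
          have "(\<Sum>j\<in>V. z i * (z j * (if i = j then 1 + \<epsilon> else 0))) = (\<Sum>j\<in>V. if i = j then (1 + \<epsilon>) * (z i)\<^sup>2 else 0)"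
            by (rule sum.cong) (auto simp: power2_eq_square)
          also have "\<dots> = (1 + \<epsilon>) * (z i)\<^sup>2" using fin that by simp
          finally show ?thesis .
        qed
        then have "(\<Sum>i\<in>V. \<Sum>j\<in>V. z i * (z j * (if i = j then 1 + \<epsilon> else 0))) = (\<Sum>i\<in>V. (1 + \<epsilon>) * (z i)\<^sup>2)"
          by (rule sum.cong[OF refl])
        then show ?thesis by (simp add: N_def sum_distrib_left)
      qed
      also have "(\<Sum>i\<in>V. \<Sum>j\<in>V. (sqrt (p i) * z i) * (sqrt (p j) * z j)) = P"
        by (simp add: P_def power2_eq_square sum_product)
      finally show ?thesis unfolding T_def .
    qed
    show ?thesis
    proof (cases "N = 0")
      case True
      then have "\<forall>i\<in>V. z i = 0" using fin unfolding N_def by (subst (asm) sum_nonneg_eq_0_iff) auto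
      then have "quad V M z = 0" by (simp add: quad_def)
      then show ?thesis by simp
    next
      case False
      then have Npos: "0 < N" unfolding N_def by (simp add: order_less_le sum_nonneg)
      define Yz where "Yz = (\<lambda>(i,j). if i \<in> V \<and> j \<in> V then z i * z j / N else 0)"
      have YzY: "Yz \<in> Yset V" unfolding Yz_def N_def by (rule Yset_rank1[OF fin Npos[unfolded N_def]])
      have e1: "(\<Sum>i\<in>V. \<Sum>j\<in>V. eZ V E i j * Y0 (i,j) * Yz (i,j)) = T / N"
        unfolding T_def Yz_def by (simp add: sum_divide_distrib mult_ac)
      have e2: "Lw V p Yz = P / N"
      proof -
        have "Lw V p Yz = (\<Sum>i\<in>V. \<Sum>j\<in>V. (sqrt (p i) * z i) * (sqrt (p j) * z j)) / N"
          unfolding Lw_def Yz_def by (simp add: sum_divide_distrib mult_ac)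
        also have "\<dots> = P / N" by (simp add: P_def power2_eq_square sum_product)
        finally show ?thesis .
      qed
      have "0 < G Yz" using var[OF YzY] pos by simp
      then have "0 < T / N + b * (P / N - 1 - \<epsilon>)" unfolding G_def e1 e2 .
      then have "0 < N * (T / N + b * (P / N - 1 - \<epsilon>))" using Npos by simp
      also have "N * (T / N + b * (P / N - 1 - \<epsilon>)) = T + b * P - b * (1 + \<epsilon>) * N"
        using Npos by (simp add: field_simps)
      finally have h: "0 < T + b * P - b * (1 + \<epsilon>) * N" .
      have "0 < (T + b * P - b * (1 + \<epsilon>) * N) / (- b)" using h bneg by (intro divide_pos_pos) auto
      also have "(T + b * P - b * (1 + \<epsilon>) * N) / (- b) = (1 + \<epsilon>) * N - P + T / (- b)"
        using bneg by (simp add: field_simps)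
      finally show ?thesis unfolding quadM by simp
    qed
  qed
  show ?thesis using Msym Mpsd Mdiag Medge by blast
qed

lemma eps_limit:
  fixes S :: real
  assumes n: "1 \<le> n" and h: "\<And>\<epsilon>. 0 < \<epsilon> \<Longrightarrow> S \<le> (1 + \<epsilon>) ^ n"
  shows "S \<le> 1"
proof (rule ccontr)
  assume "\<not> S \<le> 1"
  then have S1: "1 < S" by simp
  define r where "r = root n S"
  have n0: "0 < n" using n by simp
  have r1: "1 < r" unfolding r_def using n0 S1 by simp
  have rn: "r ^ n = S" unfolding r_def using n0 S1 by simp
  define e where "e = (r - 1) / 2"
  have e0: "0 < e" using r1 by (simp add: e_def)
  have "1 + e < r" unfolding e_def using r1 by (simp add: field_simps)
  then have "(1 + e) ^ n < r ^ n"
    using e0 n0 by (intro power_strict_mono) auto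
  then show False using h[OF e0] rn by simp
qed

lemma ipD_option:
  assumes "finite V"
  shows "ip (insert None (Some ` V)) f g = f None * g None + (\<Sum>k\<in>V. f (Some k) * g (Some k))"
proof -
  have "ip (insert None (Some ` V)) f g = f None * g None + (\<Sum>w\<in>Some ` V. f w * g w)"
    unfolding ip_def using assms by (subst sum.insert) auto
  also have "(\<Sum>w\<in>Some ` V. f w * g w) = (\<Sum>k\<in>V. f (Some k) * g (Some k))"
    by (subst sum.reindex) auto
  finally show ?thesis .
qed

lemma prod_list_scale:
  fixes f p :: "'a \<Rightarrow> real" and k :: real
  shows "set X \<subseteq> V \<Longrightarrow> (\<And>i. i \<in> V \<Longrightarrow> f i = p i / k) \<Longrightarrow>
    prod_list (map f X) = prod_list (map p X) / k ^ length X"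
  by (induction X) (auto simp: times_divide_times_eq)

lemma case2:
  assumes sg: "simple_graph V E" and pa: "prob_assignment V E p"
    and noH1: "\<forall>Y\<in>Yset V. (\<forall>i\<in>V. \<forall>j\<in>V. compl_edges V E i j \<longrightarrow> Y (i,j) = 0) \<longrightarrow> Lw V p Y \<le> 1"
  shows "self_consistent V E p"
proof -
  have fin: "finite V" and Ein: "\<forall>x y. E x y \<longrightarrow> x \<in> V \<and> y \<in> V"
    and Esym: "\<forall>x y. E x y \<longrightarrow> E y x" and Eirr: "\<forall>x. \<not> E x x"
    using sg by (auto simp: simple_graph_def)
  have pnn: "\<forall>i\<in>V. 0 \<le> p i" using pa by (simp add: prob_assignment_def)
  have main: "(\<Sum>X\<in>L. prod_list (map p X)) \<le> 1" if n: "1 \<le> n" and L: "is_clique_or_pow V E n L" for n L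
  proof (cases "V = {}")
    case True
    have "L = {}"
    proof -
      have "L \<subseteq> or_pow_vertices V n" using L by (simp add: is_clique_or_pow_def)
      moreover have "or_pow_vertices V n = {}" using True n by (auto simp: or_pow_vertices_def)
      ultimately show ?thesis by blast
    qed
    then show ?thesis by simp
  next
    case ne: False
    have LV: "X \<in> L \<Longrightarrow> set X \<subseteq> V \<and> length X = n" for X
      using L by (auto simp: is_clique_or_pow_def or_pow_vertices_def)
    show ?thesis
    proof (rule eps_limit[OF n])
      fix \<epsilon> :: real assume eps: "0 < \<epsilon>"
      obtain M where Msym: "\<forall>i j. M i j = M j i" and Mpsd: "\<forall>z. 0 \<le> quad V M z"
        and Mdiag: "\<forall>i\<in>V. M i i = 1 + \<epsilon> - p i"
        and Medge: "\<forall>i\<in>V. \<forall>j\<in>V. E i j \<longrightarrow> M i j = - (sqrt (p i) * sqrt (p j))"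
        using psd_certificate[OF fin ne eps Esym Eirr pnn noH1] by blast
      obtain x where x: "\<forall>i\<in>V. \<forall>j\<in>V. M i j = (\<Sum>k\<in>V. x i k * x j k)"
        using gram[OF fin, of M] Msym Mpsd by blast
      define D where "D = insert None (Some ` V)"
      have fD: "finite D" unfolding D_def using fin by simp
      define u where "u i w = (case w of None \<Rightarrow> sqrt (p i) | Some k \<Rightarrow> x i k) / sqrt (1 + \<epsilon>)" for i w
      define c where "c w = (if w = None then 1 else (0::real))" for w :: "'a option"
      have s1: "sqrt (1 + \<epsilon>) * sqrt (1 + \<epsilon>) = 1 + \<epsilon>" using eps by simp
      have s1': "sqrt (1 + \<epsilon>) \<noteq> 0" using eps by simp
      have ipuu: "ip D (u i) (u j) = (sqrt (p i) * sqrt (p j) + M i j) / (1 + \<epsilon>)" if "i \<in> V" "j \<in> V" for i j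
      proof -
        have "ip D (u i) (u j) = (sqrt (p i) * sqrt (p j) + (\<Sum>k\<in>V. x i k * x j k)) / (sqrt (1 + \<epsilon>) * sqrt (1 + \<epsilon>))"
          unfolding D_def ipD_option[OF fin] u_def by (simp add: sum_divide_distrib add_divide_distrib)
        then show ?thesis using x that s1 by simp
      qed
      have un: "\<forall>i\<in>V. ip D (u i) (u i) \<le> 1"
      proof
        fix i assume i: "i \<in> V"
        have "sqrt (p i) * sqrt (p i) = p i" using pnn i by simp
        then show "ip D (u i) (u i) \<le> 1" using ipuu[OF i i] Mdiag i eps by simp
      qed
      have orth: "\<forall>i j. E i j \<longrightarrow> ip D (u i) (u j) = 0"
        using ipuu Medge Ein by simp
      have cc: "ip D c c \<le> 1" unfolding D_def ipD_option[OF fin] c_def by simp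
      have cu: "(ip D c (u i))\<^sup>2 = p i / (1 + \<epsilon>)" if "i \<in> V" for i
      proof -
        have "ip D c (u i) = sqrt (p i) / sqrt (1 + \<epsilon>)"
          unfolding D_def ipD_option[OF fin] c_def u_def by simp
        then show ?thesis using pnn that eps by (simp add: power_divide)
      qed
      have sc: "self_consistent V E (\<lambda>i. (ip D c (u i))\<^sup>2)"
        by (rule onr_sc[OF fin fD]) (use Eirr Esym Ein un orth cc in auto)
      then have "(\<Sum>X\<in>L. prod_list (map (\<lambda>i. (ip D c (u i))\<^sup>2) X)) \<le> 1"
        using n L by (auto simp: self_consistent_def)
      also have "(\<Sum>X\<in>L. prod_list (map (\<lambda>i. (ip D c (u i))\<^sup>2) X)) = (\<Sum>X\<in>L. prod_list (map p X)) / (1 + \<epsilon>) ^ n"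
        unfolding sum_divide_distrib
      proof (rule sum.cong[OF refl])
        fix X assume X: "X \<in> L"
        show "prod_list (map (\<lambda>i. (ip D c (u i))\<^sup>2) X) = prod_list (map p X) / (1 + \<epsilon>) ^ n"
          using prod_list_scale[of X V "\<lambda>i. (ip D c (u i))\<^sup>2" p "1 + \<epsilon>"] LV[OF X] cu by auto
      qed
      finally show "(\<Sum>X\<in>L. prod_list (map p X)) \<le> (1 + \<epsilon>) ^ n"
        using eps by (simp add: divide_le_eq)
    qed
  qed
  show ?thesis unfolding self_consistent_def using pa main by auto
qed

lemma case1:
  assumes sg: "simple_graph V E" and scomp: "self_complementary V E" and pnn: "\<forall>i\<in>V. 0 \<le> p i"
    and Y: "Y \<in> Yset V" and van: "\<forall>i\<in>V. \<forall>j\<in>V. compl_edges V E i j \<longrightarrow> Y (i,j) = 0"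
    and big: "1 < Lw V p Y"
  shows "\<exists>q. self_consistent V E q \<and> inconsistent_with V E p q"
proof -
  have fin: "finite V" and Ein: "\<forall>x y. E x y \<longrightarrow> x \<in> V \<and> y \<in> V"
    and Esym: "\<forall>x y. E x y \<longrightarrow> E y x" and Eirr: "\<forall>x. \<not> E x x"
    using sg by (auto simp: simple_graph_def)
  have Ysym: "\<And>i j. Y (i,j) = Y (j,i)" using Y by (simp add: Yset_def)
  have Ypsd: "\<And>z. 0 \<le> quad V (\<lambda>i j. Y (i,j)) z"
    using Y by (simp add: Yset_def quad_def quadU_def)
  have Ytr: "(\<Sum>i\<in>V. Y (i,i)) = 1" using Y by (simp add: Yset_def)
  obtain x where x: "\<forall>i\<in>V. \<forall>j\<in>V. Y (i,j) = (\<Sum>k\<in>V. x i k * x j k)"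
    using gram[OF fin, of "\<lambda>i j. Y (i,j)"] Ysym Ypsd by blast
  have xip: "Y (i,j) = ip V (x i) (x j)" if "i \<in> V" "j \<in> V" for i j
    using x that by (simp add: ip_def)
  define sp where "sp i = sqrt (p i)" for i
  define s where "s k = (\<Sum>i\<in>V. sp i * x i k)" for k
  have ss: "ip V s s = Lw V p Y"
  proof -
    have "ip V s s = (\<Sum>k\<in>V. \<Sum>i\<in>V. \<Sum>j\<in>V. (sp i * sp j) * (x i k * x j k))"
      unfolding ip_def s_def by (simp add: sum_product mult_ac)
    also have "\<dots> = (\<Sum>i\<in>V. \<Sum>k\<in>V. \<Sum>j\<in>V. (sp i * sp j) * (x i k * x j k))"
      by (rule sum.swap)
    also have "\<dots> = (\<Sum>i\<in>V. \<Sum>j\<in>V. \<Sum>k\<in>V. (sp i * sp j) * (x i k * x j k))"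
      by (rule sum.cong[OF refl]) (rule sum.swap)
    also have "\<dots> = (\<Sum>i\<in>V. \<Sum>j\<in>V. sp i * sp j * Y (i,j))"
      by (intro sum.cong refl) (simp add: x sum_distrib_left)
    finally show ?thesis by (simp add: Lw_def sp_def)
  qed
  define L where "L = ip V s s"
  have L1: "1 < L" using big ss by (simp add: L_def)
  define nrm where "nrm = sqrt L"
  have nrm0: "0 < nrm" using L1 by (simp add: nrm_def)
  have nrm2: "nrm * nrm = L" using L1 by (simp add: nrm_def)
  define nx where "nx i = sqrt (ip V (x i) (x i))" for i
  define u where "u i k = x i k / nx i" for i k
  define c where "c k = s k / nrm" for k
  have cc: "ip V c c = 1"
  proof -
    have "ip V c c = ip V s s / (nrm * nrm)" unfolding ip_def c_def by (simp add: sum_divide_distrib)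
    then show ?thesis using nrm2 L1 by (simp add: L_def)
  qed
  have ipuu: "ip V (u i) (u j) = ip V (x i) (x j) / (nx i * nx j)" for i j
    unfolding ip_def u_def by (simp add: sum_divide_distrib)
  have un: "ip V (u i) (u i) \<le> 1" for i
  proof -
    have nn: "0 \<le> ip V (x i) (x i)" by (rule ip_self_nonneg)
    have "nx i * nx i = ip V (x i) (x i)" unfolding nx_def using nn by simp
    then show ?thesis unfolding ipuu by (cases "ip V (x i) (x i) = 0") auto
  qed
  have key: "ip V c (x i) = nx i * ip V c (u i)" for i
  proof (cases "nx i = 0")
    case True
    then have "ip V (x i) (x i) = 0" unfolding nx_def using ip_self_nonneg[of V "x i"] by simp
    then have "\<forall>k\<in>V. x i k = 0" using fin unfolding ip_def
      by (subst (asm) sum_nonneg_eq_0_iff) auto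
    then have "ip V c (x i) = 0" by (simp add: ip_def)
    then show ?thesis using True by simp
  next
    case False
    then show ?thesis unfolding ip_def u_def by (simp add: sum_divide_distrib[symmetric] mult_ac)
  qed
  have sum1: "(\<Sum>i\<in>V. sp i * ip V c (x i)) = nrm"
  proof -
    have "(\<Sum>i\<in>V. sp i * ip V c (x i)) = (\<Sum>i\<in>V. \<Sum>k\<in>V. c k * (sp i * x i k))"
      unfolding ip_def by (simp add: sum_distrib_left mult_ac)
    also have "\<dots> = (\<Sum>k\<in>V. \<Sum>i\<in>V. c k * (sp i * x i k))" by (rule sum.swap)
    also have "\<dots> = ip V c s" unfolding ip_def s_def by (simp add: sum_distrib_left)
    also have "\<dots> = L / nrm" unfolding L_def ip_def c_def by (simp add: sum_divide_distrib)
    also have "\<dots> = nrm" using nrm2 nrm0 by (simp add: field_simps)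
    finally show ?thesis .
  qed
  have nxsum: "(\<Sum>i\<in>V. (nx i)\<^sup>2) = 1"
  proof -
    have "(\<Sum>i\<in>V. (nx i)\<^sup>2) = (\<Sum>i\<in>V. Y (i,i))"
      by (rule sum.cong[OF refl]) (simp add: nx_def xip ip_self_nonneg)
    then show ?thesis using Ytr by simp
  qed
  have big2: "1 < (\<Sum>i\<in>V. p i * (ip V c (u i))\<^sup>2)"
  proof -
    have "(\<Sum>i\<in>V. (sp i * ip V c (u i)) * nx i)\<^sup>2 \<le> (\<Sum>i\<in>V. (sp i * ip V c (u i))\<^sup>2) * (\<Sum>i\<in>V. (nx i)\<^sup>2)"
      by (rule Cauchy_Schwarz_ineq_sum)
    moreover have "(\<Sum>i\<in>V. (sp i * ip V c (u i)) * nx i) = nrm"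
      using sum1 key by (simp add: mult_ac)
    moreover have "(\<Sum>i\<in>V. (sp i * ip V c (u i))\<^sup>2) = (\<Sum>i\<in>V. p i * (ip V c (u i))\<^sup>2)"
      by (rule sum.cong[OF refl]) (simp add: sp_def power_mult_distrib pnn)
    ultimately have "nrm\<^sup>2 \<le> (\<Sum>i\<in>V. p i * (ip V c (u i))\<^sup>2)" using nxsum by simp
    moreover have "nrm\<^sup>2 = L" using nrm2 by (simp add: power2_eq_square)
    ultimately show ?thesis using L1 by simp
  qed
  obtain f where bij: "bij_betw f V V" and iso: "\<forall>x\<in>V. \<forall>y\<in>V. E x y \<longleftrightarrow> compl_edges V E (f x) (f y)"
    using scomp by (auto simp: self_complementary_def graph_iso_def)
  define w where "w j = u (f j)" for j
  define q where "q j = (ip V c (w j))\<^sup>2" for j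
  have fV: "f j \<in> V" if "j \<in> V" for j using bij that by (simp add: bij_betw_apply)
  have sc: "self_consistent V E q"
    unfolding q_def
  proof (rule onr_sc[OF fin fin])
    show "\<forall>x. \<not> E x x" by (rule Eirr)
    show "\<forall>x y. E x y \<longrightarrow> E y x" by (rule Esym)
    show "\<forall>x y. E x y \<longrightarrow> x \<in> V \<and> y \<in> V" by (rule Ein)
    show "\<forall>i\<in>V. ip V (w i) (w i) \<le> 1" by (simp add: w_def un)
    show "ip V c c \<le> 1" by (simp add: cc)
    show "\<forall>i j. E i j \<longrightarrow> ip V (w i) (w j) = 0"
    proof (intro allI impI)
      fix i j assume e: "E i j"
      then have ij: "i \<in> V" "j \<in> V" using Ein by auto
      then have "compl_edges V E (f i) (f j)" using iso e by blast
      then have "Y (f i, f j) = 0" using van fV ij by blast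
      then have "ip V (x (f i)) (x (f j)) = 0" using xip fV ij by simp
      then show "ip V (w i) (w j) = 0" by (simp add: w_def ipuu)
    qed
  qed
  define h where "h = inv_into V f"
  have hV: "h i \<in> V" if "i \<in> V" for i
    using bij that unfolding h_def by (meson bij_betw_apply bij_betw_inv_into)
  have fh: "f (h i) = i" if "i \<in> V" for i
    using bij that unfolding h_def by (simp add: bij_betw_inv_into_right)
  define C where "C = (\<lambda>i. (i, h i)) ` V"
  have clique: "is_clique_or2 V E C"
    unfolding is_clique_or2_def
  proof (intro conjI ballI impI)
    show "C \<subseteq> V \<times> V" using hV by (auto simp: C_def)
  next
    fix a b assume a: "a \<in> C" and b: "b \<in> C" and ab: "a \<noteq> b"
    obtain i where i: "i \<in> V" "a = (i, h i)" using a by (auto simp: C_def)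
    obtain j where j: "j \<in> V" "b = (j, h j)" using b by (auto simp: C_def)
    have ij: "i \<noteq> j" using ab i j by auto
    show "or_adj2 E a b"
    proof (cases "E i j")
      case True then show ?thesis using i j by (simp add: or_adj2_def)
    next
      case False
      then have "compl_edges V E i j" using i j ij by (simp add: compl_edges_def)
      then have "compl_edges V E (f (h i)) (f (h j))" using fh i j by simp
      then have "E (h i) (h j)" using iso hV i j by blast
      then show ?thesis using i j by (simp add: or_adj2_def)
    qed
  qed
  have "(\<Sum>(i,j)\<in>C. p i * q j) = (\<Sum>i\<in>V. p i * q (h i))"
    unfolding C_def by (subst sum.reindex) (auto simp: inj_on_def)
  also have "\<dots> = (\<Sum>i\<in>V. p i * (ip V c (u i))\<^sup>2)"
    by (rule sum.cong[OF refl]) (simp add: q_def w_def fh)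
  finally have "1 < (\<Sum>(i,j)\<in>C. p i * q j)" using big2 by simp
  then have "inconsistent_with V E p q" using clique by (auto simp: inconsistent_with_def)
  then show ?thesis using sc by blast
qed

theorem lemma4:
  fixes V :: "'a set" and E :: "'a \<Rightarrow> 'a \<Rightarrow> bool" and p :: "'a \<Rightarrow> real"
  assumes "simple_graph V E"
    and "self_complementary V E"
    and "prob_assignment V E p"
  shows "self_consistent V E p \<or>
         (\<exists>q. self_consistent V E q \<and> inconsistent_with V E p q)"
proof (cases "\<exists>Y\<in>Yset V. (\<forall>i\<in>V. \<forall>j\<in>V. compl_edges V E i j \<longrightarrow> Y (i,j) = 0) \<and> 1 < Lw V p Y")
  case True
  then obtain Y where "Y \<in> Yset V" "\<forall>i\<in>V. \<forall>j\<in>V. compl_edges V E i j \<longrightarrow> Y (i,j) = 0" "1 < Lw V p Y"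
    by blast
  moreover have "\<forall>i\<in>V. 0 \<le> p i" using assms(3) by (simp add: prob_assignment_def)
  ultimately show ?thesis using case1[OF assms(1,2)] by blast
next
  case False
  then have "\<forall>Y\<in>Yset V. (\<forall>i\<in>V. \<forall>j\<in>V. compl_edges V E i j \<longrightarrow> Y (i,j) = 0) \<longrightarrow> Lw V p Y \<le> 1"
    by (auto simp: not_less)
  then show ?thesis using case2[OF assms(1,3)] by blast
qed

end
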